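(* Let $\mathbb X$ be a multi-sorted topological structure in the signature of $\underset{\sim}{\mathbf M}_n$, with sorts $X_0,\dots,X_n$, operations $g_k\colon X_k\to X_0$ ($k\in[1,n]$), relations $\leqslant^k$ ($k\in[0,n]$) and $\leqslant^{jk}$ ($1\le j<k\le n$), and topology $\mathscr T$. Then $\mathbb X\in\mathbb{IS}_c\mathbb P(\underset{\sim}{\mathbf M}_n)$ if and only if all of the following hold: (A1) $g_k\colon X_k\to X_0$ is continuous for all $k\in[1,n]$; (A2) for all $k\in[1,n]$ and all $x,y\in X_k$, if $x\leqslant^k y$ then $g_k(x)=g_k(y)$; (A3) for all $j,k\in[1,n]$ with $j<k$ and all $x\in X_j$, $y\in X_k$, if $x\leqslant^{jk}y$ then $g_j(x)=g_k(y)$; (A4) for all $j,k\in[1,n]$ with $j<k$ and all $x,y\in X_j$, $u,v\in X_k$, if $x\leqslant^j y$, $y\leqslant^{jk}u$ and $u\leqslant^k v$, then $x\leqslant^{jk}v$; (A5) for all $j,k,\ell\in[1,n]$ with $j<k<\ell$ and all $x\in X_j$, $y\in X_k$, $z\in X_\ell$, if $x\leqslant^{jk}y$ and $y\leqslant^{k\ell}z$, then $x\leqslant^{j\ell}z$; (A6) $\langle X_k;\leqslant^k,\mathscr T_k\rangle$ is a Priestley space for all $k\in[0,n]$ (in particular $\leqslant^k$ is a partial order on $X_k$); (A7) for all $j,k\in[1,n]$ with $j<k$ and all $x\in X_j$, $y\in X_k$ with $x\not\leqslant^{jk}y$, there exist sets $U_j,U_{j+1},\dots,U_k$, with $U_\ell$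 a clopen up-set of $\langle X_\ell;\leqslant^\ell,\mathscr T_\ell\rangle$ for each $\ell\in[j,k]$, which are mutually increasing and satisfy $x\in U_j$ and $y\in X_k\setminus U_k$. (When $n=1$, only (A1), (A2) and (A6) have any content.)
   Context: Fix an integer $n\ge 1$ and write $[m,p]=\{i\in\mathbb Z: m\le i\le p\}$. Let $M_0=\{\top^0,\mathbf f^0,\mathbf t^0,\bot^0\}$ and, for $k\in[1,n]$, $M_k=\{\top^k,\bot^k,\mathbf f^k,\mathbf t^k,\mathbf 0^k,\mathbf 1^k\}$ (pairwise disjoint sets). For $k\in[1,n]$ let $g_k\colon M_k\to M_0$ be the map $\top^k\mapsto\top^0$, $\bot^k\mapsto\bot^0$, $\mathbf f^k,\mathbf 0^k\mapsto\mathbf f^0$, $\mathbf t^k,\mathbf 1^k\mapsto\mathbf t^0$. Let $\leqslant^0$ be the partial order on $M_0$ with $\bot^0<\mathbf f^0<\top^0$, $\bot^0<\mathbf t^0<\top^0$, and $\mathbf f^0,\mathbf t^0$ incomparable. For $k\in[1,n]$ let $\leqslant^k$ be the partial order on $M_k$ whose only strict comparabilities are $\mathbf f^k<\mathbf 0^k$ and $\mathbf t^k<\mathbf 1^k$. For $1\le j<k\le n$ let ${\leqslant^{jk}}=\{(\top^j,\top^k),(\bot^j,\bot^k),(\mathbf f^j,\mathbf f^k),(\mathbf f^j,\mathbf 0^k),(\mathbf 0^j,\mathbf 0^k),(\mathbf t^j,\mathbf t^k),(\mathbf t^j,\mathbf 1^k),(\mathbf 1^j,\mathbf 1^k)\}\subseteq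 M_j\times M_k$. The multi-sorted structure $\underset{\sim}{\mathbf M}_n$ has sorts $M_0,\dots,M_n$, unary operations $g_k\colon M_k\to M_0$ ($k\in[1,n]$), binary relations $\leqslant^k$ ($k\in[0,n]$) and $\leqslant^{jk}$ ($1\le j<k\le n$), and the discrete topology on each sort. A multi-sorted topological structure in this signature consists of pairwise disjoint topological spaces $X_0,\dots,X_n$ (the sorts; $X=X_0\cup\dots\cup X_n$ carries the disjoint-union topology $\mathscr T$, and $\mathscr T_k$ denotes the topology on $X_k$), maps $g_k\colon X_k\to X_0$ ($k\in[1,n]$), and relations $\leqslant^k\subseteq X_k\times X_k$ ($k\in[0,n]$) and $\leqslant^{jk}\subseteq X_j\times X_k$ ($1\le j<k\le n$). A morphism between such structures is a continuous map sending each sort into the corresponding sort and preserving each $g_k$ and each relation; an isomorphism is a bijective morphism whose inverse is a morphism. For a non-empty set $S$ the power $\underset{\sim}{\mathbf M}_n^S$ has sorts $M_k^S$ with the product topology and operations and relations defined pointwise; a closed substructure is given by topologically closed subsets $Y_k\subseteq M_k^S$ with $g_k(Y_k)\subseteq Y_0$, with the restricted operations, relations and topology. $\mathbb{IS}_c\mathbb P(\underset{\sim}{\mathbf M}_n)$ is the class of structures isomorphic to a closed substructure of $\underset{\sim}{\mathbf M}_n^S$ for some non-empty set $S$. A Priestley space is an ordered topological space that is compact and totally order-disconnected (for $x\not\le y$ there is a clopen up-set containing $x$ but not $y$). A subset $U\subseteq X_\ell$ is an up-set of $\langle X_\ell;\leqslant^\ell\rangle$ if $x\in U$ and $x\leqslant^\ell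 y$ imply $y\in U$. Write ${\leqslant^{kk}}:={\leqslant^k}$ for $k\in[1,n]$. For $j\le k$ in $[1,n]$ and $U_\ell\subseteq X_\ell$ ($\ell\in[j,k]$), the sets $U_j,\dots,U_k$ are mutually increasing if for all $i\le\ell$ in $[j,k]$, whenever $x\in U_i$, $y\in X_\ell$ and $x\leqslant^{i\ell}y$, then $y\in U_\ell$. *)

theory Defs
  imports "HOL-Analysis.Analysis"
begin

text \<open>Elements of the sorts of M_n. The superscript k is the nat argument.
  Sort 0 is {Top 0, Fm 0, Tm 0, Bot 0}; sort k (k >= 1) is
  {Top k, Bot k, Fm k, Tm k, Zm k, Om k} (Zm = bold 0, Om = bold 1).\<close>
datatype mel = Top nat | Bot nat | Fm nat | Tm nat | Zm nat | Om nat

definition Msort :: "nat \<Rightarrow> mel set" where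
  "Msort k = (if k = 0 then {Top 0, Fm 0, Tm 0, Bot 0}
              else {Top k, Bot k, Fm k, Tm k, Zm k, Om k})"

fun gM :: "mel \<Rightarrow> mel" where
  "gM (Top _) = Top 0"
| "gM (Bot _) = Bot 0"
| "gM (Fm _) = Fm 0"
| "gM (Zm _) = Fm 0"
| "gM (Tm _) = Tm 0"
| "gM (Om _) = Tm 0"

definition leM :: "nat \<Rightarrow> mel \<Rightarrow> mel \<Rightarrow> bool" where
  "leM k a b = (a \<in> Msort k \<and> b \<in> Msort k \<and>
     (if k = 0 then (a = b \<or> a = Bot 0 \<or> b = Top 0)
      else (a = b \<or> (a = Fm k \<and> b = Zm k) \<or> (a = Tm k \<and> b = Om k))))"

definition lejkM :: "nat \<Rightarrow> nat \<Rightarrow> mel \<Rightarrow> mel \<Rightarrow> bool" where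
  "lejkM j k a b = ((a, b) \<in> {(Top j, Top k), (Bot j, Bot k), (Fm j, Fm k), (Fm j, Zm k),
                               (Zm j, Zm k), (Tm j, Tm k), (Tm j, Om k), (Om j, Om k)})"

definition PT :: "nat \<Rightarrow> 's set \<Rightarrow> ('s \<Rightarrow> mel) topology" where
  "PT k S = product_topology (\<lambda>_. discrete_topology (Msort k)) S"

definition gP :: "'s set \<Rightarrow> ('s \<Rightarrow> mel) \<Rightarrow> ('s \<Rightarrow> mel)" where
  "gP S f = restrict (\<lambda>s. gM (f s)) S"

definition leP :: "nat \<Rightarrow> 's set \<Rightarrow> ('s \<Rightarrow> mel) \<Rightarrow> ('s \<Rightarrow> mel) \<Rightarrow> bool" where
  "leP k S f h = (\<forall>s\<in>S. leM k (f s) (h s))"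

definition lejkP :: "nat \<Rightarrow> nat \<Rightarrow> 's set \<Rightarrow> ('s \<Rightarrow> mel) \<Rightarrow> ('s \<Rightarrow> mel) \<Rightarrow> bool" where
  "lejkP j k S f h = (\<forall>s\<in>S. lejkM j k (f s) (h s))"

definition closed_sub :: "nat \<Rightarrow> 's set \<Rightarrow> (nat \<Rightarrow> ('s \<Rightarrow> mel) set) \<Rightarrow> bool" where
  "closed_sub n S Y =
     ((\<forall>k\<le>n. closedin (PT k S) (Y k)) \<and>
      (\<forall>k\<in>{1..n}. \<forall>f\<in>Y k. gP S f \<in> Y 0))"

text \<open>A structure is given by topologies T k (k in [0,n]) on a common carrier type, whose
  spaces topspace (T k) are the (pairwise disjoint) sorts X_k; maps g k : X_k -> X_0;
  relations le k on X_k; relations lejk j k from X_j to X_k (1 <= j < k <= n).\<close>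
definition mstructure ::
  "nat \<Rightarrow> (nat \<Rightarrow> 'a topology) \<Rightarrow> (nat \<Rightarrow> 'a \<Rightarrow> 'a) \<Rightarrow> (nat \<Rightarrow> 'a \<Rightarrow> 'a \<Rightarrow> bool)
    \<Rightarrow> (nat \<Rightarrow> nat \<Rightarrow> 'a \<Rightarrow> 'a \<Rightarrow> bool) \<Rightarrow> bool" where
  "mstructure n T g le lejk =
     ((\<forall>j\<le>n. \<forall>k\<le>n. j \<noteq> k \<longrightarrow> topspace (T j) \<inter> topspace (T k) = {}) \<and>
      (\<forall>k\<in>{1..n}. \<forall>x\<in>topspace (T k). g k x \<in> topspace (T 0)) \<and>
      (\<forall>k\<le>n. \<forall>x y. le k x y \<longrightarrow> x \<in> topspace (T k) \<and> y \<in> topspace (T k)) \<and>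
      (\<forall>j k. 1 \<le> j \<and> j < k \<and> k \<le> n \<longrightarrow>
         (\<forall>x y. lejk j k x y \<longrightarrow> x \<in> topspace (T j) \<and> y \<in> topspace (T k))))"

text \<open>phi is an isomorphism from the structure onto the closed substructure Y of M_n^S:
  on each sort a homeomorphism onto Y_k, commuting with the g_k, and preserving and
  reflecting every relation (i.e. a bijective morphism whose inverse is a morphism).\<close>
definition iso_to ::
  "nat \<Rightarrow> (nat \<Rightarrow> 'a topology) \<Rightarrow> (nat \<Rightarrow> 'a \<Rightarrow> 'a) \<Rightarrow> (nat \<Rightarrow> 'a \<Rightarrow> 'a \<Rightarrow> bool)
    \<Rightarrow> (nat \<Rightarrow> nat \<Rightarrow> 'a \<Rightarrow> 'a \<Rightarrow> bool) \<Rightarrow> 's set \<Rightarrow> (nat \<Rightarrow> ('s \<Rightarrow> mel) set)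
    \<Rightarrow> ('a \<Rightarrow> ('s \<Rightarrow> mel)) \<Rightarrow> bool" where
  "iso_to n T g le lejk S Y \<phi> =
     ((\<forall>k\<le>n. homeomorphic_map (T k) (subtopology (PT k S) (Y k)) \<phi>) \<and>
      (\<forall>k\<in>{1..n}. \<forall>x\<in>topspace (T k). \<phi> (g k x) = gP S (\<phi> x)) \<and>
      (\<forall>k\<le>n. \<forall>x\<in>topspace (T k). \<forall>y\<in>topspace (T k). le k x y \<longleftrightarrow> leP k S (\<phi> x) (\<phi> y)) \<and>
      (\<forall>j k. 1 \<le> j \<and> j < k \<and> k \<le> n \<longrightarrow>
         (\<forall>x\<in>topspace (T j). \<forall>y\<in>topspace (T k). lejk j k x y \<longleftrightarrow> lejkP j k S (\<phi> x) (\<phi> y))))"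

definition ISCP_via ::
  "nat \<Rightarrow> (nat \<Rightarrow> 'a topology) \<Rightarrow> (nat \<Rightarrow> 'a \<Rightarrow> 'a) \<Rightarrow> (nat \<Rightarrow> 'a \<Rightarrow> 'a \<Rightarrow> bool)
    \<Rightarrow> (nat \<Rightarrow> nat \<Rightarrow> 'a \<Rightarrow> 'a \<Rightarrow> bool) \<Rightarrow> 's set \<Rightarrow> bool" where
  "ISCP_via n T g le lejk S =
     (S \<noteq> {} \<and> (\<exists>Y \<phi>. closed_sub n S Y \<and> iso_to n T g le lejk S Y \<phi>))"

definition upset :: "'a topology \<Rightarrow> ('a \<Rightarrow> 'a \<Rightarrow> bool) \<Rightarrow> 'a set \<Rightarrow> bool" where
  "upset X le U = (U \<subseteq> topspace X \<and> (\<forall>x\<in>U. \<forall>y\<in>topspace X. le x y \<longrightarrow> y \<in> U))"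

definition priestley :: "'a topology \<Rightarrow> ('a \<Rightarrow> 'a \<Rightarrow> bool) \<Rightarrow> bool" where
  "priestley X le =
     ((\<forall>x\<in>topspace X. le x x) \<and>
      (\<forall>x\<in>topspace X. \<forall>y\<in>topspace X. le x y \<and> le y x \<longrightarrow> x = y) \<and>
      (\<forall>x\<in>topspace X. \<forall>y\<in>topspace X. \<forall>z\<in>topspace X. le x y \<and> le y z \<longrightarrow> le x z) \<and>
      compact_space X \<and>
      (\<forall>x\<in>topspace X. \<forall>y\<in>topspace X. \<not> le x y \<longrightarrow>
          (\<exists>U. closedin X U \<and> openin X U \<and> upset X le U \<and> x \<in> U \<and> y \<notin> U)))"

definition rel2 :: "(nat \<Rightarrow> 'a \<Rightarrow> 'a \<Rightarrow> bool) \<Rightarrow> (nat \<Rightarrow> nat \<Rightarrow> 'a \<Rightarrow> 'a \<Rightarrow> bool)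
    \<Rightarrow> nat \<Rightarrow> nat \<Rightarrow> 'a \<Rightarrow> 'a \<Rightarrow> bool" where
  "rel2 le lejk i l = (if i = l then le i else lejk i l)"

definition mutually_increasing ::
  "(nat \<Rightarrow> 'a topology) \<Rightarrow> (nat \<Rightarrow> 'a \<Rightarrow> 'a \<Rightarrow> bool) \<Rightarrow> (nat \<Rightarrow> nat \<Rightarrow> 'a \<Rightarrow> 'a \<Rightarrow> bool)
    \<Rightarrow> nat \<Rightarrow> nat \<Rightarrow> (nat \<Rightarrow> 'a set) \<Rightarrow> bool" where
  "mutually_increasing T le lejk j k U =
     (\<forall>i l. j \<le> i \<and> i \<le> l \<and> l \<le> k \<longrightarrow>
        (\<forall>x\<in>U i. \<forall>y\<in>topspace (T l). rel2 le lejk i l x y \<longrightarrow> y \<in> U l))"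

definition conditions_A ::
  "nat \<Rightarrow> (nat \<Rightarrow> 'a topology) \<Rightarrow> (nat \<Rightarrow> 'a \<Rightarrow> 'a) \<Rightarrow> (nat \<Rightarrow> 'a \<Rightarrow> 'a \<Rightarrow> bool)
    \<Rightarrow> (nat \<Rightarrow> nat \<Rightarrow> 'a \<Rightarrow> 'a \<Rightarrow> bool) \<Rightarrow> bool" where
  "conditions_A n T g le lejk =
   ( \<comment> \<open>A1\<close>
     (\<forall>k\<in>{1..n}. continuous_map (T k) (T 0) (g k)) \<and>
     \<comment> \<open>A2\<close>
     (\<forall>k\<in>{1..n}. \<forall>x\<in>topspace (T k). \<forall>y\<in>topspace (T k). le k x y \<longrightarrow> g k x = g k y) \<and>
     \<comment> \<open>A3\<close>
     (\<forall>j k. 1 \<le> j \<and> j < k \<and> k \<le> n \<longrightarrow>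
        (\<forall>x\<in>topspace (T j). \<forall>y\<in>topspace (T k). lejk j k x y \<longrightarrow> g j x = g k y)) \<and>
     \<comment> \<open>A4\<close>
     (\<forall>j k. 1 \<le> j \<and> j < k \<and> k \<le> n \<longrightarrow>
        (\<forall>x\<in>topspace (T j). \<forall>y\<in>topspace (T j). \<forall>u\<in>topspace (T k). \<forall>v\<in>topspace (T k).
           le j x y \<and> lejk j k y u \<and> le k u v \<longrightarrow> lejk j k x v)) \<and>
     \<comment> \<open>A5\<close>
     (\<forall>j k l. 1 \<le> j \<and> j < k \<and> k < l \<and> l \<le> n \<longrightarrow>
        (\<forall>x\<in>topspace (T j). \<forall>y\<in>topspace (T k). \<forall>z\<in>topspace (T l).
           lejk j k x y \<and> lejk k l y z \<longrightarrow> lejk j l x z)) \<and>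
     \<comment> \<open>A6\<close>
     (\<forall>k\<le>n. priestley (T k) (le k)) \<and>
     \<comment> \<open>A7\<close>
     (\<forall>j k. 1 \<le> j \<and> j < k \<and> k \<le> n \<longrightarrow>
        (\<forall>x\<in>topspace (T j). \<forall>y\<in>topspace (T k). \<not> lejk j k x y \<longrightarrow>
           (\<exists>U. (\<forall>l\<in>{j..k}. closedin (T l) (U l) \<and> openin (T l) (U l) \<and> upset (T l) (le l) (U l)) \<and>
                mutually_increasing T le lejk j k U \<and>
                x \<in> U j \<and> y \<in> topspace (T k) - U k))))"

end

theory Submission
  imports Defs
begin

definition rel2M :: "nat \<Rightarrow> nat \<Rightarrow> mel \<Rightarrow> mel \<Rightarrow> bool" where
  "rel2M j l = (if j = l then leM j else lejkM j l)"

lemma leM_gM: "1 \<le> k \<Longrightarrow> leM k a b \<Longrightarrow> gM a = gM b"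
  by (auto simp: leM_def Msort_def)
lemma lejkM_gM: "lejkM j k a b \<Longrightarrow> gM a = gM b"
  by (auto simp: lejkM_def)
lemma leM_refl: "a \<in> Msort k \<Longrightarrow> leM k a a"
  by (auto simp: leM_def)
lemma leM_in: "leM k a b \<Longrightarrow> a \<in> Msort k \<and> b \<in> Msort k"
  by (auto simp: leM_def)
lemma leM_trans: "leM k a b \<Longrightarrow> leM k b c \<Longrightarrow> leM k a c"
  by (auto simp: leM_def Msort_def split: if_splits)
lemma leM_antisym: "leM k a b \<Longrightarrow> leM k b a \<Longrightarrow> a = b"
  by (auto simp: leM_def Msort_def split: if_splits)
lemma A4M: "1 \<le> j \<Longrightarrow> j < k \<Longrightarrow> leM j a b \<Longrightarrow> lejkM j k b c \<Longrightarrow> leM k c d \<Longrightarrow> lejkM j k a d"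
  by (auto simp: leM_def lejkM_def Msort_def split: if_splits)
lemma A5M: "j < k \<Longrightarrow> k < l \<Longrightarrow> lejkM j k a b \<Longrightarrow> lejkM k l b c \<Longrightarrow> lejkM j l a c"
  by (auto simp: lejkM_def)
lemma rel2M_trans: "1 \<le> j \<Longrightarrow> j \<le> i \<Longrightarrow> i \<le> l \<Longrightarrow> rel2M j i a b \<Longrightarrow> rel2M i l b c \<Longrightarrow> rel2M j l a c"
  by (auto simp: rel2M_def leM_def lejkM_def Msort_def split: if_splits)

lemma cont_disc:
  assumes "f ` topspace X \<subseteq> U" "\<And>u. u \<in> U \<Longrightarrow> openin X {x \<in> topspace X. f x = u}"
  shows "continuous_map X (discrete_topology U) f"
  unfolding continuous_map
proof (intro conjI allI impI)
  show "f ` topspace X \<subseteq> topspace (discrete_topology U)" using assms(1) by simp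
  fix W assume "openin (discrete_topology U) W"
  then have W: "W \<subseteq> U" by simp
  have "{x \<in> topspace X. f x \<in> W} = \<Union>((\<lambda>u. {x \<in> topspace X. f x = u}) ` W)" by auto
  moreover have "openin X (\<Union>((\<lambda>u. {x \<in> topspace X. f x = u}) ` W))"
    using assms(2) W by (intro openin_Union) auto
  ultimately show "openin X {x \<in> topspace X. f x \<in> W}" by simp
qed

definition clopen_pred :: "'a topology \<Rightarrow> ('a \<Rightarrow> bool) \<Rightarrow> bool" where
  "clopen_pred X p = (openin X {x \<in> topspace X. p x} \<and> closedin X {x \<in> topspace X. p x})"

lemma clopen_pred_eq: "clopen_pred X p \<Longrightarrow> openin X {x \<in> topspace X. p x = a}"
proof (cases a)
  case True
  assume "clopen_pred X p" then show ?thesis using True by (simp add: clopen_pred_def)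
next
  case False
  assume c: "clopen_pred X p"
  have "{x \<in> topspace X. p x = a} = topspace X - {x \<in> topspace X. p x}" using False by auto
  then show ?thesis using c by (simp add: clopen_pred_def openin_diff)
qed

lemma bool3_open:
  assumes "clopen_pred X p" "clopen_pred X q" "clopen_pred X r"
  shows "openin X {x \<in> topspace X. F (p x) (q x) (r x) = u}"
proof -
  let ?P = "\<lambda>a b c. {x \<in> topspace X. p x = a} \<inter> {x \<in> topspace X. q x = b} \<inter> {x \<in> topspace X. r x = c}"
  have e: "{x \<in> topspace X. F (p x) (q x) (r x) = u} = \<Union>{?P a b c | a b c. F a b c = u}" by auto
  show ?thesis unfolding e
    using clopen_pred_eq[OF assms(1)] clopen_pred_eq[OF assms(2)] clopen_pred_eq[OF assms(3)]
    by (intro openin_Union) auto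
qed

lemma clopen_pred_set: "closedin X V \<Longrightarrow> openin X V \<Longrightarrow> clopen_pred X (\<lambda>x. x \<in> V)"
proof -
  assume "closedin X V" "openin X V"
  moreover have "{x \<in> topspace X. x \<in> V} = V" using closedin_subset[OF \<open>closedin X V\<close>] by auto
  ultimately show "clopen_pred X (\<lambda>x. x \<in> V)" by (simp add: clopen_pred_def)
qed

lemma clopen_pred_pre: "continuous_map X Y f \<Longrightarrow> closedin Y V \<Longrightarrow> openin Y V \<Longrightarrow> clopen_pred X (\<lambda>x. f x \<in> V)"
  unfolding clopen_pred_def
  by (simp add: openin_continuous_map_preimage closedin_continuous_map_preimage)

definition cb :: "bool \<Rightarrow> bool \<Rightarrow> mel" where
  "cb a b = (if a \<and> b then Top 0 else if a then Fm 0 else if b then Tm 0 else Bot 0)"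

fun lift :: "nat \<Rightarrow> mel \<Rightarrow> bool \<Rightarrow> mel" where
  "lift k (Top _) c = Top k"
| "lift k (Bot _) c = Bot k"
| "lift k (Fm _) c = (if c then Zm k else Fm k)"
| "lift k (Tm _) c = (if c then Om k else Tm k)"
| "lift k (Zm _) c = Zm k"
| "lift k (Om _) c = Om k"

definition sortof :: "nat \<Rightarrow> (nat \<Rightarrow> 'a topology) \<Rightarrow> 'a \<Rightarrow> nat" where
  "sortof n T x = (SOME k. 1 \<le> k \<and> k \<le> n \<and> x \<in> topspace (T k))"

definition mk :: "nat \<Rightarrow> (nat \<Rightarrow> 'a topology) \<Rightarrow> (nat \<Rightarrow> 'a \<Rightarrow> 'a) \<Rightarrow> 'a set \<Rightarrow> 'a set \<Rightarrow> (nat \<Rightarrow> 'a set) \<Rightarrow> 'a \<Rightarrow> mel" where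
  "mk n T g A B V x = (if x \<in> topspace (T 0) then cb (x \<in> A) (x \<in> B)
      else lift (sortof n T x) (cb (g (sortof n T x) x \<in> A) (g (sortof n T x) x \<in> B)) (x \<in> V (sortof n T x)))"

definition morph :: "nat \<Rightarrow> (nat \<Rightarrow> 'a topology) \<Rightarrow> (nat \<Rightarrow> 'a \<Rightarrow> 'a) \<Rightarrow> (nat \<Rightarrow> 'a \<Rightarrow> 'a \<Rightarrow> bool)
    \<Rightarrow> (nat \<Rightarrow> nat \<Rightarrow> 'a \<Rightarrow> 'a \<Rightarrow> bool) \<Rightarrow> ('a \<Rightarrow> mel) \<Rightarrow> bool" where
  "morph n T g le lejk \<alpha> =
    ((\<forall>k\<le>n. continuous_map (T k) (discrete_topology (Msort k)) \<alpha>) \<and>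
     (\<forall>k\<in>{1..n}. \<forall>x\<in>topspace (T k). \<alpha> (g k x) = gM (\<alpha> x)) \<and>
     (\<forall>k\<le>n. \<forall>x\<in>topspace (T k). \<forall>y\<in>topspace (T k). le k x y \<longrightarrow> leM k (\<alpha> x) (\<alpha> y)) \<and>
     (\<forall>j k. 1 \<le> j \<and> j < k \<and> k \<le> n \<longrightarrow>
        (\<forall>x\<in>topspace (T j). \<forall>y\<in>topspace (T k). lejk j k x y \<longrightarrow> lejkM j k (\<alpha> x) (\<alpha> y))))"

lemma mi_rule: "mutually_increasing T le lejk a b V \<Longrightarrow> a \<le> i \<Longrightarrow> i \<le> l \<Longrightarrow> l \<le> b \<Longrightarrow> x \<in> V i
   \<Longrightarrow> y \<in> topspace (T l) \<Longrightarrow> rel2 le lejk i l x y \<Longrightarrow> y \<in> V l"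
  unfolding mutually_increasing_def by blast

lemma cb_Msort: "cb a b \<in> Msort 0" by (simp add: cb_def Msort_def)
lemma lift_Msort: "1 \<le> k \<Longrightarrow> lift k (cb a b) c \<in> Msort k" by (simp add: cb_def Msort_def)
lemma gM_lift: "gM (lift k (cb a b) c) = cb a b" by (simp add: cb_def)
lemma le_lift: "1 \<le> k \<Longrightarrow> (c \<longrightarrow> d) \<Longrightarrow> leM k (lift k (cb a b) c) (lift k (cb a b) d)"
  by (auto simp: cb_def leM_def Msort_def)
lemma lejk_lift: "(c \<longrightarrow> d) \<Longrightarrow> lejkM j k (lift j (cb a b) c) (lift k (cb a b) d)"
  by (auto simp: cb_def lejkM_def)
lemma le_cb: "(a \<longrightarrow> a') \<Longrightarrow> (b \<longrightarrow> b') \<Longrightarrow> leM 0 (cb a b) (cb a' b')"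
  by (auto simp: cb_def leM_def Msort_def)

context
  fixes n T g le lejk
  assumes ms: "mstructure n T g le lejk" and CA: "conditions_A n T g le lejk"
begin

lemma disj: "j \<le> n \<Longrightarrow> k \<le> n \<Longrightarrow> j \<noteq> k \<Longrightarrow> x \<in> topspace (T j) \<Longrightarrow> x \<notin> topspace (T k)"
  using ms unfolding mstructure_def by blast

lemma sortof_eq: "k \<in> {1..n} \<Longrightarrow> x \<in> topspace (T k) \<Longrightarrow> sortof n T x = k"
  unfolding sortof_def
proof (rule some_equality)
  assume "k \<in> {1..n}" "x \<in> topspace (T k)"
  then show "1 \<le> k \<and> k \<le> n \<and> x \<in> topspace (T k)" by auto
  fix m assume "k \<in> {1..n}" "x \<in> topspace (T k)" "1 \<le> m \<and> m \<le> n \<and> x \<in> topspace (T m)"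
  then show "m = k" using disj[of k m x] by auto
qed

lemma mk_0: "x \<in> topspace (T 0) \<Longrightarrow> mk n T g A B V x = cb (x \<in> A) (x \<in> B)"
  by (simp add: mk_def)

lemma mk_k: "k \<in> {1..n} \<Longrightarrow> x \<in> topspace (T k) \<Longrightarrow>
   mk n T g A B V x = lift k (cb (g k x \<in> A) (g k x \<in> B)) (x \<in> V k)"
  using disj[of k 0 x] sortof_eq[of k x] by (simp add: mk_def)

lemma gin: "k \<in> {1..n} \<Longrightarrow> x \<in> topspace (T k) \<Longrightarrow> g k x \<in> topspace (T 0)"
  using ms unfolding mstructure_def by blast

lemma lein: "k \<le> n \<Longrightarrow> le k x y \<Longrightarrow> x \<in> topspace (T k) \<and> y \<in> topspace (T k)"
  using ms unfolding mstructure_def by blast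

lemma A1: "k \<in> {1..n} \<Longrightarrow> continuous_map (T k) (T 0) (g k)"
  using CA[unfolded conditions_A_def, THEN conjunct1] by blast
lemma A2: "k \<in> {1..n} \<Longrightarrow> x \<in> topspace (T k) \<Longrightarrow> y \<in> topspace (T k) \<Longrightarrow> le k x y \<Longrightarrow> g k x = g k y"
  using CA[unfolded conditions_A_def, THEN conjunct2, THEN conjunct1] by blast
lemma A3: "1 \<le> j \<Longrightarrow> j < k \<Longrightarrow> k \<le> n \<Longrightarrow> x \<in> topspace (T j) \<Longrightarrow> y \<in> topspace (T k) \<Longrightarrow>
   lejk j k x y \<Longrightarrow> g j x = g k y"
  using CA[unfolded conditions_A_def, THEN conjunct2, THEN conjunct2, THEN conjunct1] by blast
lemma A6: "k \<le> n \<Longrightarrow> priestley (T k) (le k)"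
  using CA[unfolded conditions_A_def, THEN conjunct2, THEN conjunct2, THEN conjunct2, THEN conjunct2, THEN conjunct2, THEN conjunct1] by blast
lemma A7: "1 \<le> j \<Longrightarrow> j < k \<Longrightarrow> k \<le> n \<Longrightarrow> x \<in> topspace (T j) \<Longrightarrow> y \<in> topspace (T k) \<Longrightarrow>
   \<not> lejk j k x y \<Longrightarrow> (\<exists>U. (\<forall>l\<in>{j..k}. closedin (T l) (U l) \<and> openin (T l) (U l) \<and> upset (T l) (le l) (U l)) \<and>
                mutually_increasing T le lejk j k U \<and>
                x \<in> U j \<and> y \<in> topspace (T k) - U k)"
  using CA[unfolded conditions_A_def, THEN conjunct2, THEN conjunct2, THEN conjunct2, THEN conjunct2, THEN conjunct2, THEN conjunct2] by blast

lemma mk_morph: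
  assumes Ac: "closedin (T 0) A" "openin (T 0) A" "upset (T 0) (le 0) A"
      and Bc: "closedin (T 0) B" "openin (T 0) B" "upset (T 0) (le 0) B"
      and Vc: "\<And>l. l \<in> {1..n} \<Longrightarrow> closedin (T l) (V l) \<and> openin (T l) (V l)"
      and Vm: "mutually_increasing T le lejk 1 n V"
  shows "morph n T g le lejk (mk n T g A B V)"
  unfolding morph_def
proof (intro conjI allI impI ballI)
  fix k assume k: "k \<le> n"
  show "continuous_map (T k) (discrete_topology (Msort k)) (mk n T g A B V)"
  proof (cases "k = 0")
    case True
    have pa: "clopen_pred (T 0) (\<lambda>x. x \<in> A)" using Ac clopen_pred_set by blast
    have pb: "clopen_pred (T 0) (\<lambda>x. x \<in> B)" using Bc clopen_pred_set by blast
    show ?thesis unfolding True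
    proof (rule cont_disc)
      show "mk n T g A B V ` topspace (T 0) \<subseteq> Msort 0"
      proof (rule image_subsetI)
        fix x assume "x \<in> topspace (T 0)"
        then show "mk n T g A B V x \<in> Msort 0" unfolding mk_0[OF \<open>x \<in> topspace (T 0)\<close>] by (rule cb_Msort[THEN TrueE[OF TrueI]] | simp add: cb_Msort)
      qed
      fix u
      have "openin (T 0) {x \<in> topspace (T 0). (\<lambda>a b c. cb a b) (x \<in> A) (x \<in> B) (x \<in> A) = u}"
        by (rule bool3_open[OF pa pb pa])
      moreover have "{x \<in> topspace (T 0). mk n T g A B V x = u} =
          {x \<in> topspace (T 0). (\<lambda>a b c. cb a b) (x \<in> A) (x \<in> B) (x \<in> A) = u}"
        by (auto simp add: mk_0)
      ultimately show "openin (T 0) {x \<in> topspace (T 0). mk n T g A B V x = u}" by simp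
    qed
  next
    case False
    then have kk: "k \<in> {1..n}" using k by auto
    have pa: "clopen_pred (T k) (\<lambda>x. g k x \<in> A)" using Ac clopen_pred_pre A1[OF kk] by blast
    have pb: "clopen_pred (T k) (\<lambda>x. g k x \<in> B)" using Bc clopen_pred_pre A1[OF kk] by blast
    have pv: "clopen_pred (T k) (\<lambda>x. x \<in> V k)" using Vc[OF kk] clopen_pred_set by blast
    show ?thesis
    proof (rule cont_disc)
      show "mk n T g A B V ` topspace (T k) \<subseteq> Msort k"
      proof (rule image_subsetI)
        fix x assume x: "x \<in> topspace (T k)"
        have "1 \<le> k" using kk by simp
        then show "mk n T g A B V x \<in> Msort k" unfolding mk_k[OF kk x] by (rule lift_Msort)
      qed
      fix u
      have "openin (T k) {x \<in> topspace (T k). (\<lambda>a b c. lift k (cb a b) c) (g k x \<in> A) (g k x \<in> B) (x \<in> V k) = u}"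
        by (rule bool3_open[OF pa pb pv])
      moreover have "{x \<in> topspace (T k). mk n T g A B V x = u} =
          {x \<in> topspace (T k). (\<lambda>a b c. lift k (cb a b) c) (g k x \<in> A) (g k x \<in> B) (x \<in> V k) = u}"
        by (auto simp add: mk_k[OF kk])
      ultimately show "openin (T k) {x \<in> topspace (T k). mk n T g A B V x = u}" by simp
    qed
  qed
next
  fix k x assume k: "k \<in> {1..n}" and x: "x \<in> topspace (T k)"
  show "mk n T g A B V (g k x) = gM (mk n T g A B V x)"
    unfolding mk_k[OF k x] mk_0[OF gin[OF k x]] gM_lift ..
next
  fix k x y assume k: "k \<le> n" and x: "x \<in> topspace (T k)" and y: "y \<in> topspace (T k)" and l: "le k x y"
  show "leM k (mk n T g A B V x) (mk n T g A B V y)"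
  proof (cases "k = 0")
    case True
    have "x \<in> A \<longrightarrow> y \<in> A" "x \<in> B \<longrightarrow> y \<in> B" using Ac(3) Bc(3) l y True unfolding upset_def by auto
    then show ?thesis using x y unfolding True mk_0[OF x[unfolded True]] mk_0[OF y[unfolded True]] by (intro le_cb)
  next
    case False
    then have kk: "k \<in> {1..n}" using k by auto
    have "x \<in> V k \<longrightarrow> y \<in> V k" using mi_rule[OF Vm, of k k x y] kk y l by (auto simp: rel2_def)
    moreover have "1 \<le> k" using kk by simp
    ultimately show ?thesis unfolding mk_k[OF kk x] mk_k[OF kk y] A2[OF kk x y l] by (intro le_lift)
  qed
next
  fix j k x y assume jk: "1 \<le> j \<and> j < k \<and> k \<le> n" and x: "x \<in> topspace (T j)" and y: "y \<in> topspace (T k)"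
    and l: "lejk j k x y"
  have jj: "j \<in> {1..n}" and kk: "k \<in> {1..n}" using jk by auto
  have vv: "x \<in> V j \<longrightarrow> y \<in> V k" using mi_rule[OF Vm, of j k x y] jk y l by (auto simp: rel2_def)
  have geq: "g j x = g k y" using A3[OF _ _ _ x y l] jk by auto
  have e1: "mk n T g A B V x = lift j (cb (g k y \<in> A) (g k y \<in> B)) (x \<in> V j)"
    using mk_k[OF jj x] geq by simp
  have e2: "mk n T g A B V y = lift k (cb (g k y \<in> A) (g k y \<in> B)) (y \<in> V k)"
    by (rule mk_k[OF kk y])
  show "lejkM j k (mk n T g A B V x) (mk n T g A B V y)"
    unfolding e1 e2 by (rule lejk_lift[OF vv])
qed


lemma ext_V:
  assumes j: "1 \<le> j" "j \<le> k" "k \<le> n"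
    and Uc: "\<forall>l\<in>{j..k}. closedin (T l) (U l) \<and> openin (T l) (U l)"
    and Um: "mutually_increasing T le lejk j k U"
  shows "\<forall>l\<in>{1..n}. closedin (T l) ((\<lambda>l. if l < j then {} else if l \<le> k then U l else topspace (T l)) l)
            \<and> openin (T l) ((\<lambda>l. if l < j then {} else if l \<le> k then U l else topspace (T l)) l)"
    and "mutually_increasing T le lejk 1 n (\<lambda>l. if l < j then {} else if l \<le> k then U l else topspace (T l))"
proof -
  show "\<forall>l\<in>{1..n}. closedin (T l) ((\<lambda>l. if l < j then {} else if l \<le> k then U l else topspace (T l)) l)
            \<and> openin (T l) ((\<lambda>l. if l < j then {} else if l \<le> k then U l else topspace (T l)) l)"
    using Uc by auto
  show "mutually_increasing T le lejk 1 n (\<lambda>l. if l < j then {} else if l \<le> k then U l else topspace (T l))"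
    unfolding mutually_increasing_def
  proof (intro allI impI ballI)
    fix i l x y assume il: "1 \<le> i \<and> i \<le> l \<and> l \<le> n"
      and x: "x \<in> (if i < j then {} else if i \<le> k then U i else topspace (T i))"
      and y: "y \<in> topspace (T l)" and r: "rel2 le lejk i l x y"
    show "y \<in> (if l < j then {} else if l \<le> k then U l else topspace (T l))"
    proof (cases "k < l")
      case True then show ?thesis using y j by auto
    next
      case False
      then have "\<not> i < j" "i \<le> k" "\<not> l < j" "l \<le> k" using x il by (auto split: if_splits)
      then have "x \<in> U i" using x by simp
      then have "y \<in> U l" using mi_rule[OF Um, of i l x y] \<open>\<not> i < j\<close> \<open>l \<le> k\<close> il y r by simp
      then show ?thesis using \<open>\<not> l < j\<close> \<open>l \<le> k\<close> by simp
    qed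
  qed
qed

lemma top0_ok: "closedin (T 0) (topspace (T 0)) \<and> openin (T 0) (topspace (T 0)) \<and> upset (T 0) (le 0) (topspace (T 0))"
  by (simp add: upset_def)

lemma empty_ok: "closedin X {} \<and> openin X {} \<and> upset X r {}"
  by (simp add: upset_def)

lemma morph_Msort: "morph n T g le lejk \<alpha> \<Longrightarrow> k \<le> n \<Longrightarrow> x \<in> topspace (T k) \<Longrightarrow> \<alpha> x \<in> Msort k"
  unfolding morph_def continuous_map_def by auto

lemma sepU0: "x \<in> topspace (T 0) \<Longrightarrow> y \<in> topspace (T 0) \<Longrightarrow> \<not> le 0 x y \<Longrightarrow>
   \<exists>U. closedin (T 0) U \<and> openin (T 0) U \<and> upset (T 0) (le 0) U \<and> x \<in> U \<and> y \<notin> U"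
  using A6[of 0] unfolding priestley_def by blast

lemma morphU:
  assumes "closedin (T 0) U" "openin (T 0) U" "upset (T 0) (le 0) U"
  shows "morph n T g le lejk (mk n T g U U (\<lambda>_. {}))"
  by (rule mk_morph[OF assms assms]) (auto simp: mutually_increasing_def)

lemma S0: "x \<in> topspace (T 0) \<Longrightarrow> y \<in> topspace (T 0) \<Longrightarrow> \<not> le 0 x y \<Longrightarrow>
   \<exists>\<alpha>. morph n T g le lejk \<alpha> \<and> \<not> leM 0 (\<alpha> x) (\<alpha> y)"
proof -
  assume x: "x \<in> topspace (T 0)" and y: "y \<in> topspace (T 0)" and nl: "\<not> le 0 x y"
  obtain U where U: "closedin (T 0) U" "openin (T 0) U" "upset (T 0) (le 0) U" "x \<in> U" "y \<notin> U"
    using sepU0[OF x y nl] by blast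
  show ?thesis
  proof (intro exI conjI)
    show "morph n T g le lejk (mk n T g U U (\<lambda>_. {}))" using morphU U by blast
    show "\<not> leM 0 (mk n T g U U (\<lambda>_. {}) x) (mk n T g U U (\<lambda>_. {}) y)"
      unfolding mk_0[OF x] mk_0[OF y] using U by (simp add: cb_def leM_def)
  qed
qed

lemma Sg: "j \<in> {1..n} \<Longrightarrow> k \<in> {1..n} \<Longrightarrow> x \<in> topspace (T j) \<Longrightarrow> y \<in> topspace (T k) \<Longrightarrow> g j x \<noteq> g k y \<Longrightarrow>
   \<exists>\<alpha>. morph n T g le lejk \<alpha> \<and> gM (\<alpha> x) \<noteq> gM (\<alpha> y)"
proof -
  assume j: "j \<in> {1..n}" and k: "k \<in> {1..n}" and x: "x \<in> topspace (T j)" and y: "y \<in> topspace (T k)"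
    and ne: "g j x \<noteq> g k y"
  have gx: "g j x \<in> topspace (T 0)" and gy: "g k y \<in> topspace (T 0)" using gin j k x y by auto
  have "\<not> le 0 (g j x) (g k y) \<or> \<not> le 0 (g k y) (g j x)"
    using A6[of 0] ne gx gy unfolding priestley_def by blast
  then obtain U where U: "closedin (T 0) U" "openin (T 0) U" "upset (T 0) (le 0) U"
    and d: "(g j x \<in> U) \<noteq> (g k y \<in> U)"
    using sepU0[OF gx gy] sepU0[OF gy gx] by metis
  let ?a = "mk n T g U U (\<lambda>_. {})"
  have m: "morph n T g le lejk ?a" using morphU U by blast
  have "gM (?a x) = ?a (g j x)" "gM (?a y) = ?a (g k y)" using m j k x y unfolding morph_def by auto
  then have "gM (?a x) = cb (g j x \<in> U) (g j x \<in> U)" "gM (?a y) = cb (g k y \<in> U) (g k y \<in> U)"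
    using mk_0[OF gx] mk_0[OF gy] by auto
  then have "gM (?a x) \<noteq> gM (?a y)" using d by (auto simp: cb_def)
  then show ?thesis using m by blast
qed

lemma Sk: "k \<in> {1..n} \<Longrightarrow> x \<in> topspace (T k) \<Longrightarrow> y \<in> topspace (T k) \<Longrightarrow> \<not> le k x y \<Longrightarrow>
   \<exists>\<alpha>. morph n T g le lejk \<alpha> \<and> \<not> leM k (\<alpha> x) (\<alpha> y)"
proof -
  assume k: "k \<in> {1..n}" and x: "x \<in> topspace (T k)" and y: "y \<in> topspace (T k)" and nl: "\<not> le k x y"
  show ?thesis
  proof (cases "g k x = g k y")
    case False
    then obtain \<alpha> where "morph n T g le lejk \<alpha>" "gM (\<alpha> x) \<noteq> gM (\<alpha> y)" using Sg[OF k k x y] by blast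
    then show ?thesis using leM_gM k by auto
  next
    case True
    have kk: "1 \<le> k" "k \<le> n" using k by auto
    obtain U where U: "closedin (T k) U" "openin (T k) U" "upset (T k) (le k) U" "x \<in> U" "y \<notin> U"
      using A6[OF kk(2)] x y nl unfolding priestley_def by blast
    have Um: "mutually_increasing T le lejk k k (\<lambda>_. U)"
      unfolding mutually_increasing_def
    proof (intro allI impI ballI)
      fix i l z w assume il: "k \<le> i \<and> i \<le> l \<and> l \<le> k" and z: "z \<in> U" and w: "w \<in> topspace (T l)"
        and r: "rel2 le lejk i l z w"
      have "i = k" "l = k" using il by auto
      then show "w \<in> U" using U(3) z w r unfolding upset_def rel2_def by auto
    qed
    define V where "V = (\<lambda>l. if l < k then {} else if l \<le> k then (\<lambda>_. U) l else topspace (T l))"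
    have Vc: "\<forall>l\<in>{1..n}. closedin (T l) (V l) \<and> openin (T l) (V l)"
      and Vm: "mutually_increasing T le lejk 1 n V"
      using ext_V[OF kk(1) order_refl kk(2) _ Um] U unfolding V_def by auto
    let ?a = "mk n T g (topspace (T 0)) {} V"
    have m: "morph n T g le lejk ?a"
      by (rule mk_morph[OF top0_ok[THEN conjunct1] top0_ok[THEN conjunct2, THEN conjunct1]
            top0_ok[THEN conjunct2, THEN conjunct2] empty_ok[THEN conjunct1] empty_ok[THEN conjunct2, THEN conjunct1]
            empty_ok[THEN conjunct2, THEN conjunct2]])
         (use Vc Vm in auto)
    have "?a x = Zm k" "?a y = Fm k" unfolding mk_k[OF k x] mk_k[OF k y]
      using gin[OF k x] gin[OF k y] U(4,5) by (auto simp: V_def cb_def)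
    then show ?thesis using m by (auto simp: leM_def)
  qed
qed

lemma Sjk: "1 \<le> j \<Longrightarrow> j < k \<Longrightarrow> k \<le> n \<Longrightarrow> x \<in> topspace (T j) \<Longrightarrow> y \<in> topspace (T k) \<Longrightarrow> \<not> lejk j k x y \<Longrightarrow>
   \<exists>\<alpha>. morph n T g le lejk \<alpha> \<and> \<not> lejkM j k (\<alpha> x) (\<alpha> y)"
proof -
  assume j1: "1 \<le> j" and jk: "j < k" and kn: "k \<le> n" and x: "x \<in> topspace (T j)" and y: "y \<in> topspace (T k)"
    and nl: "\<not> lejk j k x y"
  have jj: "j \<in> {1..n}" and kk: "k \<in> {1..n}" using j1 jk kn by auto
  show ?thesis
  proof (cases "g j x = g k y")
    case False
    then obtain \<alpha> where "morph n T g le lejk \<alpha>" "gM (\<alpha> x) \<noteq> gM (\<alpha> y)" using Sg[OF jj kk x y] by blast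
    then show ?thesis using lejkM_gM by blast
  next
    case True
    obtain U where Uc: "\<forall>l\<in>{j..k}. closedin (T l) (U l) \<and> openin (T l) (U l) \<and> upset (T l) (le l) (U l)"
      and Um: "mutually_increasing T le lejk j k U" and xU: "x \<in> U j" and yU: "y \<in> topspace (T k) - U k"
      using A7[OF j1 jk kn x y nl] by blast
    define V where "V = (\<lambda>l. if l < j then {} else if l \<le> k then U l else topspace (T l))"
    have Vc: "\<forall>l\<in>{1..n}. closedin (T l) (V l) \<and> openin (T l) (V l)"
      and Vm: "mutually_increasing T le lejk 1 n V"
      using ext_V[OF j1 _ kn _ Um] Uc jk unfolding V_def by auto
    let ?a = "mk n T g (topspace (T 0)) {} V"
    have m: "morph n T g le lejk ?a"
      by (rule mk_morph[OF top0_ok[THEN conjunct1] top0_ok[THEN conjunct2, THEN conjunct1]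
            top0_ok[THEN conjunct2, THEN conjunct2] empty_ok[THEN conjunct1] empty_ok[THEN conjunct2, THEN conjunct1]
            empty_ok[THEN conjunct2, THEN conjunct2]])
         (use Vc Vm in auto)
    have "?a x = Zm j" "?a y = Fm k" unfolding mk_k[OF jj x] mk_k[OF kk y]
      using gin[OF jj x] gin[OF kk y] xU yU jk by (auto simp: V_def cb_def)
    then show ?thesis using m by (auto simp: lejkM_def)
  qed
qed

end

lemma gM_Msort: "a \<in> Msort k \<Longrightarrow> gM a \<in> Msort 0"
  by (auto simp: Msort_def split: if_splits)

lemma topspace_PT: "topspace (PT k S) = (\<Pi>\<^sub>E s\<in>S. Msort k)"
  by (simp add: PT_def)

lemma proj_cont: "s \<in> S \<Longrightarrow> continuous_map (PT k S) (discrete_topology (Msort k)) (\<lambda>f. f s)"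
  unfolding PT_def by (rule continuous_map_product_projection)

lemma gP_cont: "continuous_map (PT k S) (PT 0 S) (gP S)"
proof -
  have "continuous_map (PT k S) (discrete_topology (Msort 0)) (\<lambda>f. gP S f s)" if "s \<in> S" for s
  proof -
    have "continuous_map (PT k S) (discrete_topology (Msort 0)) (gM \<circ> (\<lambda>f. f s))"
      by (rule continuous_map_compose[OF proj_cont[OF that]]) (auto simp: gM_Msort)
    then show ?thesis using that by (simp add: gP_def o_def)
  qed
  then show ?thesis unfolding PT_def continuous_map_componentwise
    by (auto simp: gP_def)
qed

lemma forward:
  assumes ms: "mstructure n T g le lejk" and iso: "ISCP_via n T g le lejk S"
  shows "conditions_A n T g le lejk"
proof -
  from iso obtain Y \<phi> where cs: "closed_sub n S Y" and it: "iso_to n T g le lejk S Y \<phi>"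
    unfolding ISCP_via_def by blast
  have hm: "homeomorphic_map (T k) (subtopology (PT k S) (Y k)) \<phi>" if "k \<le> n" for k
    using it that unfolding iso_to_def by blast
  have gcomm: "\<phi> (g k x) = gP S (\<phi> x)" if "k \<in> {1..n}" "x \<in> topspace (T k)" for k x
    using it that unfolding iso_to_def by blast
  have leiff: "le k x y \<longleftrightarrow> leP k S (\<phi> x) (\<phi> y)"
    if "k \<le> n" "x \<in> topspace (T k)" "y \<in> topspace (T k)" for k x y
    using it that unfolding iso_to_def by blast
  have jkiff: "lejk j k x y \<longleftrightarrow> lejkP j k S (\<phi> x) (\<phi> y)"
    if "1 \<le> j" "j < k" "k \<le> n" "x \<in> topspace (T j)" "y \<in> topspace (T k)" for j k x y
    using it that unfolding iso_to_def by blast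
  have gin: "g k x \<in> topspace (T 0)" if "k \<in> {1..n}" "x \<in> topspace (T k)" for k x
    using ms that unfolding mstructure_def by blast
  have inj: "inj_on \<phi> (topspace (T k))" if "k \<le> n" for k
    using homeomorphic_imp_injective_map[OF hm[OF that]] .
  have phiY: "\<phi> x \<in> Y k \<and> \<phi> x \<in> topspace (PT k S)" if "k \<le> n" "x \<in> topspace (T k)" for k x
    using homeomorphic_imp_surjective_map[OF hm[OF that(1)]] that(2) by auto
  have phiM: "\<phi> x s \<in> Msort k" if "k \<le> n" "x \<in> topspace (T k)" "s \<in> S" for k x s
    using phiY[OF that(1,2)] that(3) by (auto simp: topspace_PT)
  have phiE: "\<phi> x \<in> extensional S" if "k \<le> n" "x \<in> topspace (T k)" for k x
    using phiY[OF that] by (auto simp: topspace_PT PiE_def)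
  have phicont: "continuous_map (T k) (PT k S) \<phi>" if "k \<le> n" for k
    using homeomorphic_imp_continuous_map[OF hm[OF that]] continuous_map_in_subtopology by blast
  have compcont: "continuous_map (T k) (discrete_topology (Msort k)) (\<lambda>z. \<phi> z s)"
    if "k \<le> n" "s \<in> S" for k s
    using continuous_map_compose[OF phicont[OF that(1)] proj_cont[OF that(2)]] by (simp add: o_def)
  have clopen: "openin (T k) {z \<in> topspace (T k). \<phi> z s \<in> W} \<and> closedin (T k) {z \<in> topspace (T k). \<phi> z s \<in> W}"
    if "k \<le> n" "s \<in> S" for k s W
  proof -
    have e: "{z \<in> topspace (T k). \<phi> z s \<in> W} = {z \<in> topspace (T k). \<phi> z s \<in> W \<inter> Msort k}"
      using phiM[OF that(1) _ that(2)] by auto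
    have o: "openin (T k) {z \<in> topspace (T k). \<phi> z s \<in> W \<inter> Msort k}"
      by (rule openin_continuous_map_preimage[OF compcont[OF that]]) simp
    have c: "closedin (T k) {z \<in> topspace (T k). \<phi> z s \<in> W \<inter> Msort k}"
      by (rule closedin_continuous_map_preimage[OF compcont[OF that]]) simp
    show ?thesis unfolding e using o c by (rule conjI)
  qed
  have phieq: "x = y" if "k \<le> n" "x \<in> topspace (T k)" "y \<in> topspace (T k)" "\<forall>s\<in>S. \<phi> x s = \<phi> y s" for k x y
  proof -
    have "\<phi> x = \<phi> y" using phiE[OF that(1,2)] phiE[OF that(1,3)] that(4)
      by (auto simp: extensional_def fun_eq_iff)
    then show ?thesis using inj[OF that(1)] that(2,3) by (auto dest: inj_onD)
  qed
  have geq: "g j x = g k y" if "j \<in> {1..n}" "k \<in> {1..n}" "x \<in> topspace (T j)" "y \<in> topspace (T k)"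
     "\<forall>s\<in>S. gM (\<phi> x s) = gM (\<phi> y s)" for j k x y
  proof (rule phieq[of 0])
    show "\<forall>s\<in>S. \<phi> (g j x) s = \<phi> (g k y) s" using that gcomm by (simp add: gP_def)
  qed (use that gin in auto)
  have A1: "continuous_map (T k) (T 0) (g k)" if "k \<in> {1..n}" for k
  proof -
    obtain \<psi> where psi: "homeomorphic_maps (T 0) (subtopology (PT 0 S) (Y 0)) \<phi> \<psi>"
      using hm[of 0] unfolding homeomorphic_map_maps by blast
    have psic: "continuous_map (subtopology (PT 0 S) (Y 0)) (T 0) \<psi>"
      and psiinv: "\<And>x. x \<in> topspace (T 0) \<Longrightarrow> \<psi> (\<phi> x) = x"
      using psi unfolding homeomorphic_maps_def by auto
    have c1: "continuous_map (T k) (subtopology (PT k S) (Y k)) \<phi>"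
      using homeomorphic_imp_continuous_map[OF hm] that by auto
    have c2: "continuous_map (subtopology (PT k S) (Y k)) (subtopology (PT 0 S) (Y 0)) (gP S)"
      apply (rule continuous_map_into_subtopology)
       apply (rule continuous_map_from_subtopology[OF gP_cont])
      using cs that unfolding closed_sub_def by auto
    have "continuous_map (T k) (T 0) (\<psi> \<circ> (gP S \<circ> \<phi>))"
      by (rule continuous_map_compose[OF continuous_map_compose[OF c1 c2] psic])
    then show ?thesis
      by (rule continuous_map_eq) (use that gcomm psiinv gin in \<open>metis comp_apply\<close>)
  qed
  have A2: "\<forall>k\<in>{1..n}. \<forall>x\<in>topspace (T k). \<forall>y\<in>topspace (T k). le k x y \<longrightarrow> g k x = g k y"
  proof (intro ballI impI)
    fix k x y assume k: "k \<in> {1..n}" and xy: "x \<in> topspace (T k)" "y \<in> topspace (T k)" and l: "le k x y"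
    then have "\<forall>s\<in>S. leM k (\<phi> x s) (\<phi> y s)" using leiff[of k x y] by (auto simp: leP_def)
    then show "g k x = g k y" using geq[OF k k xy] leM_gM k by auto
  qed
  have A3: "\<forall>j k. 1 \<le> j \<and> j < k \<and> k \<le> n \<longrightarrow>
        (\<forall>x\<in>topspace (T j). \<forall>y\<in>topspace (T k). lejk j k x y \<longrightarrow> g j x = g k y)"
  proof (intro allI impI ballI)
    fix j k x y assume jk: "1 \<le> j \<and> j < k \<and> k \<le> n" and xy: "x \<in> topspace (T j)" "y \<in> topspace (T k)"
      and l: "lejk j k x y"
    then have "\<forall>s\<in>S. lejkM j k (\<phi> x s) (\<phi> y s)" using jkiff[of j k x y] by (auto simp: lejkP_def)
    moreover have "j \<in> {1..n}" "k \<in> {1..n}" using jk by auto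
    ultimately show "g j x = g k y" using geq[OF _ _ xy] lejkM_gM by blast
  qed
  have A4: "\<forall>j k. 1 \<le> j \<and> j < k \<and> k \<le> n \<longrightarrow>
        (\<forall>x\<in>topspace (T j). \<forall>y\<in>topspace (T j). \<forall>u\<in>topspace (T k). \<forall>v\<in>topspace (T k).
           le j x y \<and> lejk j k y u \<and> le k u v \<longrightarrow> lejk j k x v)"
  proof (intro allI impI ballI)
    fix j k x y u v assume jk: "1 \<le> j \<and> j < k \<and> k \<le> n" and xy: "x \<in> topspace (T j)" "y \<in> topspace (T j)"
      and uv: "u \<in> topspace (T k)" "v \<in> topspace (T k)" and l: "le j x y \<and> lejk j k y u \<and> le k u v"
    then have "\<forall>s\<in>S. leM j (\<phi> x s) (\<phi> y s)" "\<forall>s\<in>S. lejkM j k (\<phi> y s) (\<phi> u s)"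
      "\<forall>s\<in>S. leM k (\<phi> u s) (\<phi> v s)"
      using leiff[of j x y] leiff[of k u v] jkiff[of j k y u] by (auto simp: leP_def lejkP_def)
    then have "\<forall>s\<in>S. lejkM j k (\<phi> x s) (\<phi> v s)" using A4M jk by blast
    then show "lejk j k x v" using jkiff[of j k x v] jk xy uv by (auto simp: lejkP_def)
  qed
  have A5: "\<forall>j k l. 1 \<le> j \<and> j < k \<and> k < l \<and> l \<le> n \<longrightarrow>
        (\<forall>x\<in>topspace (T j). \<forall>y\<in>topspace (T k). \<forall>z\<in>topspace (T l).
           lejk j k x y \<and> lejk k l y z \<longrightarrow> lejk j l x z)"
  proof (intro allI impI ballI)
    fix j k l x y z assume jk: "1 \<le> j \<and> j < k \<and> k < l \<and> l \<le> n" and xyz: "x \<in> topspace (T j)"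
      "y \<in> topspace (T k)" "z \<in> topspace (T l)" and r: "lejk j k x y \<and> lejk k l y z"
    then have "\<forall>s\<in>S. lejkM j k (\<phi> x s) (\<phi> y s)" "\<forall>s\<in>S. lejkM k l (\<phi> y s) (\<phi> z s)"
      using jkiff[of j k x y] jkiff[of k l y z] by (auto simp: lejkP_def)
    then have "\<forall>s\<in>S. lejkM j l (\<phi> x s) (\<phi> z s)" using A5M jk by blast
    then show "lejk j l x z" using jkiff[of j l x z] jk xyz by (auto simp: lejkP_def)
  qed
  have A6: "priestley (T k) (le k)" if k: "k \<le> n" for k
    unfolding priestley_def
  proof (intro conjI ballI impI)
    fix x assume x: "x \<in> topspace (T k)"
    show "le k x x" using leiff[OF k x x] phiM[OF k x] leM_refl by (auto simp: leP_def)
  next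
    fix x y assume xy: "x \<in> topspace (T k)" "y \<in> topspace (T k)" and l: "le k x y \<and> le k y x"
    show "x = y" apply (rule phieq[OF k xy])
      using l leiff[OF k xy(1,2)] leiff[OF k xy(2,1)] leM_antisym by (auto simp: leP_def)
  next
    fix x y z assume xyz: "x \<in> topspace (T k)" "y \<in> topspace (T k)" "z \<in> topspace (T k)"
      and l: "le k x y \<and> le k y z"
    show "le k x z" using l leiff[OF k xyz(1,2)] leiff[OF k xyz(2,3)] leiff[OF k xyz(1,3)] leM_trans
      by (auto simp: leP_def)
  next
    have "compact_space (PT k S)" unfolding PT_def
      by (simp add: compact_space_product_topology compact_space_discrete_topology Msort_def)
    then have "compactin (PT k S) (Y k)" using cs k unfolding closed_sub_def
      by (auto intro: closedin_compact_space)
    then have "compact_space (subtopology (PT k S) (Y k))" by (rule compact_space_subtopology)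
    then show "compact_space (T k)"
      using homeomorphic_compact_space homeomorphic_map_imp_homeomorphic_space hm k by blast
  next
    fix x y assume xy: "x \<in> topspace (T k)" "y \<in> topspace (T k)" and nl: "\<not> le k x y"
    then obtain s where s: "s \<in> S" and ns: "\<not> leM k (\<phi> x s) (\<phi> y s)"
      using leiff[OF k xy] by (auto simp: leP_def)
    define U where "U = {z \<in> topspace (T k). \<phi> z s \<in> {b. leM k (\<phi> x s) b}}"
    show "\<exists>U. closedin (T k) U \<and> openin (T k) U \<and> upset (T k) (le k) U \<and> x \<in> U \<and> y \<notin> U"
    proof (intro exI conjI)
      show "closedin (T k) U" "openin (T k) U" unfolding U_def
        by (rule conjunct2[OF clopen[OF k s]], rule conjunct1[OF clopen[OF k s]])
      show "x \<in> U" using U_def xy leM_refl phiM[OF k _ s] by auto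
      show "y \<notin> U" using U_def ns by auto
      show "upset (T k) (le k) U" unfolding upset_def
      proof (intro conjI ballI impI)
        fix z w assume z: "z \<in> U" and w: "w \<in> topspace (T k)" and l: "le k z w"
        then have "leM k (\<phi> z s) (\<phi> w s)" using leiff[OF k _ w, of z] s U_def by (auto simp: leP_def)
        then show "w \<in> U" using z w U_def leM_trans by auto
      qed (auto simp: U_def)
    qed
  qed
  have A7: "\<forall>j k. 1 \<le> j \<and> j < k \<and> k \<le> n \<longrightarrow>
        (\<forall>x\<in>topspace (T j). \<forall>y\<in>topspace (T k). \<not> lejk j k x y \<longrightarrow>
           (\<exists>U. (\<forall>l\<in>{j..k}. closedin (T l) (U l) \<and> openin (T l) (U l) \<and> upset (T l) (le l) (U l)) \<and>
                mutually_increasing T le lejk j k U \<and>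
                x \<in> U j \<and> y \<in> topspace (T k) - U k))"
  proof (intro allI impI ballI)
    fix j k x y assume jk: "1 \<le> j \<and> j < k \<and> k \<le> n" and x: "x \<in> topspace (T j)"
      and y: "y \<in> topspace (T k)" and nl: "\<not> lejk j k x y"
    then obtain s where s: "s \<in> S" and ns: "\<not> lejkM j k (\<phi> x s) (\<phi> y s)"
      using jkiff[OF _ _ _ x y] by (auto simp: lejkP_def)
    define U where "U = (\<lambda>l. {z \<in> topspace (T l). \<phi> z s \<in> {b. rel2M j l (\<phi> x s) b}})"
    have relr: "rel2M i l (\<phi> z s) (\<phi> w s)" if "1 \<le> i" "i \<le> l" "l \<le> n"
      "z \<in> topspace (T i)" "w \<in> topspace (T l)" "rel2 le lejk i l z w" for i l z w
    proof (cases "i = l")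
      case True then show ?thesis using that leiff[of l z w] s by (auto simp: rel2_def rel2M_def leP_def)
    next
      case False then show ?thesis using that jkiff[of i l z w] s by (auto simp: rel2_def rel2M_def lejkP_def)
    qed
    have MI: "mutually_increasing T le lejk j k U"
      unfolding mutually_increasing_def
    proof (intro allI impI ballI)
      fix i l z w assume il: "j \<le> i \<and> i \<le> l \<and> l \<le> k" and z: "z \<in> U i" and w: "w \<in> topspace (T l)"
        and r: "rel2 le lejk i l z w"
      have "rel2M i l (\<phi> z s) (\<phi> w s)" using relr[of i l z w] il jk z w r U_def by auto
      moreover have "rel2M j i (\<phi> x s) (\<phi> z s)" using z U_def by auto
      ultimately have "rel2M j l (\<phi> x s) (\<phi> w s)" using rel2M_trans il jk by blast
      then show "w \<in> U l" using w U_def by auto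
    qed
    show "\<exists>U. (\<forall>l\<in>{j..k}. closedin (T l) (U l) \<and> openin (T l) (U l) \<and> upset (T l) (le l) (U l)) \<and>
                mutually_increasing T le lejk j k U \<and> x \<in> U j \<and> y \<in> topspace (T k) - U k"
    proof (intro exI conjI ballI)
      fix l assume l: "l \<in> {j..k}"
      have ln: "l \<le> n" using l jk by auto
      show "closedin (T l) (U l)" "openin (T l) (U l)" unfolding U_def
        by (rule conjunct2[OF clopen[OF ln s]], rule conjunct1[OF clopen[OF ln s]])
      show "upset (T l) (le l) (U l)" unfolding upset_def
      proof (intro conjI ballI impI)
        fix z w assume "z \<in> U l" "w \<in> topspace (T l)" "le l z w"
        moreover have "j \<le> l \<and> l \<le> l \<and> l \<le> k" using l by auto
        moreover have mi: "\<And>i l x y. j \<le> i \<and> i \<le> l \<and> l \<le> k \<Longrightarrow> x \<in> U i \<Longrightarrow> y \<in> topspace (T l)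
            \<Longrightarrow> rel2 le lejk i l x y \<Longrightarrow> y \<in> U l"
          using MI unfolding mutually_increasing_def by blast
        ultimately show "w \<in> U l" using mi[of l l z w] by (simp add: rel2_def)
      qed (auto simp: U_def)
    next
      show "mutually_increasing T le lejk j k U" by (rule MI)
      show "x \<in> U j" using x U_def leM_refl phiM[OF _ x s] jk by (auto simp: rel2M_def)
      show "y \<in> topspace (T k) - U k" using y U_def ns jk by (auto simp: rel2M_def)
    qed
  qed
  show ?thesis unfolding conditions_A_def
    using A1 A2 A3 A4 A5 A6 A7 by blast
qed

context
  fixes n T g le lejk
  assumes ms: "mstructure n T g le lejk" and CA: "conditions_A n T g le lejk"
begin

lemma sep_le: "k \<le> n \<Longrightarrow> x \<in> topspace (T k) \<Longrightarrow> y \<in> topspace (T k) \<Longrightarrow> \<not> le k x y \<Longrightarrow>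
   \<exists>\<alpha>. morph n T g le lejk \<alpha> \<and> \<not> leM k (\<alpha> x) (\<alpha> y)"
  using S0[OF ms CA] Sk[OF ms CA] by (cases "k = 0") auto

lemma backward: "ISCP_via n T g le lejk {\<alpha>. morph n T g le lejk \<alpha>}"
proof -
  define S where "S = {\<alpha>. morph n T g le lejk \<alpha>}"
  define \<phi> where "\<phi> = (\<lambda>x. restrict (\<lambda>\<alpha>. \<alpha> x) S)"
  define Y where "Y = (\<lambda>k. \<phi> ` topspace (T k))"
  have phis: "\<phi> x \<alpha> = \<alpha> x" if "\<alpha> \<in> S" for x \<alpha> using that by (simp add: \<phi>_def)
  have Sne: "S \<noteq> {}"
  proof -
    have "closedin (T 0) {}" "openin (T 0) {}" "upset (T 0) (le 0) {}" by (auto simp: upset_def)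
    then show ?thesis using morphU[OF ms CA] unfolding S_def by blast
  qed
  have phiPT: "\<phi> x \<in> topspace (PT k S)" if "k \<le> n" "x \<in> topspace (T k)" for k x
    using morph_Msort[OF ms CA _ that] by (auto simp: topspace_PT \<phi>_def S_def)
  have phicont: "continuous_map (T k) (PT k S) \<phi>" if k: "k \<le> n" for k
    unfolding PT_def continuous_map_componentwise
  proof (intro conjI ballI)
    show "\<phi> ` topspace (T k) \<subseteq> extensional S" by (auto simp: \<phi>_def)
    fix \<alpha> assume a: "\<alpha> \<in> S"
    have "continuous_map (T k) (discrete_topology (Msort k)) \<alpha>" using a k unfolding S_def morph_def by auto
    then show "continuous_map (T k) (discrete_topology (Msort k)) (\<lambda>x. \<phi> x \<alpha>)"
      using phis[OF a] by simp
  qed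
  have haus: "Hausdorff_space (PT k S)" for k
    unfolding PT_def by (simp add: Hausdorff_space_product_topology)
  have cpt: "compact_space (T k)" if "k \<le> n" for k
    using A6[OF ms CA that] unfolding priestley_def by blast
  have closedY: "closedin (PT k S) (Y k)" if k: "k \<le> n" for k
    unfolding Y_def
    by (rule compactin_imp_closedin[OF haus image_compactin[OF _ phicont[OF k]]])
       (use cpt[OF k] in \<open>simp add: compact_space_def\<close>)
  have inj: "inj_on \<phi> (topspace (T k))" if k: "k \<le> n" for k
  proof (rule inj_onI, rule ccontr)
    fix x y assume x: "x \<in> topspace (T k)" and y: "y \<in> topspace (T k)" and e: "\<phi> x = \<phi> y" and ne: "x \<noteq> y"
    have "\<not> le k x y \<or> \<not> le k y x" using A6[OF ms CA k] x y ne unfolding priestley_def by blast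
    then obtain \<alpha> where a: "morph n T g le lejk \<alpha>" "\<alpha> x \<noteq> \<alpha> y"
      using sep_le[OF k x y] sep_le[OF k y x] leM_refl morph_Msort[OF ms CA _ k] x y by metis
    then have "\<phi> x \<alpha> \<noteq> \<phi> y \<alpha>" using phis[of \<alpha>] S_def by auto
    then show False using e by simp
  qed
  have homeo: "homeomorphic_map (T k) (subtopology (PT k S) (Y k)) \<phi>" if k: "k \<le> n" for k
  proof (rule continuous_imp_homeomorphic_map)
    show "continuous_map (T k) (subtopology (PT k S) (Y k)) \<phi>"
      by (rule continuous_map_into_subtopology[OF phicont[OF k]]) (auto simp: Y_def)
    show "compact_space (T k)" by (rule cpt[OF k])
    show "Hausdorff_space (subtopology (PT k S) (Y k))" by (rule Hausdorff_space_subtopology[OF haus])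
    show "\<phi> ` topspace (T k) = topspace (subtopology (PT k S) (Y k))"
      using phiPT[OF k] by (auto simp: Y_def)
    show "inj_on \<phi> (topspace (T k))" by (rule inj[OF k])
  qed
  have gcomm: "\<phi> (g k x) = gP S (\<phi> x)" if k: "k \<in> {1..n}" and x: "x \<in> topspace (T k)" for k x
  proof
    fix \<alpha> show "\<phi> (g k x) \<alpha> = gP S (\<phi> x) \<alpha>"
    proof (cases "\<alpha> \<in> S")
      case True
      then have "\<alpha> (g k x) = gM (\<alpha> x)" using k x unfolding S_def morph_def by auto
      then show ?thesis using True by (simp add: \<phi>_def gP_def)
    next
      case False then show ?thesis by (simp add: \<phi>_def gP_def)
    qed
  qed
  have cs: "closed_sub n S Y"
    unfolding closed_sub_def
  proof (intro conjI allI impI ballI)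
    fix k assume "k \<le> n" then show "closedin (PT k S) (Y k)" by (rule closedY)
  next
    fix k f assume k: "k \<in> {1..n}" and f: "f \<in> Y k"
    then obtain x where x: "x \<in> topspace (T k)" "f = \<phi> x" unfolding Y_def by auto
    then show "gP S f \<in> Y 0" using gcomm[OF k x(1)] gin[OF ms CA k x(1)] unfolding Y_def
      by (metis image_eqI)
  qed
  have it: "iso_to n T g le lejk S Y \<phi>"
    unfolding iso_to_def
  proof (intro conjI allI impI ballI)
    fix k assume "k \<le> n" then show "homeomorphic_map (T k) (subtopology (PT k S) (Y k)) \<phi>" by (rule homeo)
  next
    fix k x assume "k \<in> {1..n}" "x \<in> topspace (T k)" then show "\<phi> (g k x) = gP S (\<phi> x)" by (rule gcomm)
  next
    fix k x y assume k: "k \<le> n" and x: "x \<in> topspace (T k)" and y: "y \<in> topspace (T k)"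
    show "le k x y \<longleftrightarrow> leP k S (\<phi> x) (\<phi> y)"
    proof
      assume "le k x y" then show "leP k S (\<phi> x) (\<phi> y)"
        using k x y phis unfolding leP_def S_def morph_def by auto
    next
      assume l: "leP k S (\<phi> x) (\<phi> y)"
      show "le k x y"
      proof (rule ccontr)
        assume "\<not> le k x y"
        then obtain \<alpha> where "morph n T g le lejk \<alpha>" "\<not> leM k (\<alpha> x) (\<alpha> y)" using sep_le[OF k x y] by blast
        then show False using l phis unfolding leP_def S_def by auto
      qed
    qed
  next
    fix j k x y assume jk: "1 \<le> j \<and> j < k \<and> k \<le> n" and x: "x \<in> topspace (T j)" and y: "y \<in> topspace (T k)"
    show "lejk j k x y \<longleftrightarrow> lejkP j k S (\<phi> x) (\<phi> y)"
    proof
      assume "lejk j k x y" then show "lejkP j k S (\<phi> x) (\<phi> y)"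
        using jk x y phis unfolding lejkP_def S_def morph_def by auto
    next
      assume l: "lejkP j k S (\<phi> x) (\<phi> y)"
      show "lejk j k x y"
      proof (rule ccontr)
        assume "\<not> lejk j k x y"
        then obtain \<alpha> where "morph n T g le lejk \<alpha>" "\<not> lejkM j k (\<alpha> x) (\<alpha> y)"
          using Sjk[OF ms CA _ _ _ x y] jk by blast
        then show False using l phis unfolding lejkP_def S_def by auto
      qed
    qed
  qed
  show ?thesis unfolding ISCP_via_def using Sne cs it S_def by blast
qed

end

theorem theorem4p2:
  fixes n :: nat
    and T :: "nat \<Rightarrow> 'a topology"
    and g :: "nat \<Rightarrow> 'a \<Rightarrow> 'a"
    and le :: "nat \<Rightarrow> 'a \<Rightarrow> 'a \<Rightarrow> bool"
    and lejk :: "nat \<Rightarrow> nat \<Rightarrow> 'a \<Rightarrow> 'a \<Rightarrow> bool"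
  assumes "1 \<le> n"
    and "mstructure n T g le lejk"
  shows "((\<exists>S :: 's set. ISCP_via n T g le lejk S) \<longrightarrow> conditions_A n T g le lejk)
       \<and> (conditions_A n T g le lejk \<longrightarrow> (\<exists>S :: ('a \<Rightarrow> mel) set. ISCP_via n T g le lejk S))"
proof (intro conjI impI)
  assume "\<exists>S :: 's set. ISCP_via n T g le lejk S"
  then obtain S :: "'s set" where "ISCP_via n T g le lejk S" by blast
  then show "conditions_A n T g le lejk" by (rule forward[OF assms(2)])
next
  assume "conditions_A n T g le lejk"
  then show "\<exists>S :: ('a \<Rightarrow> mel) set. ISCP_via n T g le lejk S"
    using backward[OF assms(2)] by blast
qed

end
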